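(* Let $\Lambda:\{-1,1\}^k\to\{0,1\}$ be a predicate, $c\in\mathbb R$, let $\mathcal I^*$ be an instance of $\mathrm{CSP}(\Lambda)$ on $n$ variables with $\mathrm{opt}(\mathcal I^* )=s$, let $f(x)=c-\mathcal I^*(x)$, and let $g:[q]\times[q]\to\{-1,1\}$. Then $M^g_f$ is a submatrix of $\mathcal M_{q\cdot n,s}$ in the following sense: there exist maps $y\mapsto\mathcal I_y$ from $[q]^n$ to $\Lambda^s_{qn}$ and $x\mapsto\tilde x$ from $[q]^n$ to $\{-1,1\}^{qn}$ such that $\mathcal M_{q\cdot n,s}(\mathcal I_y,\tilde x)=M^g_f(x,y)$ for all $x,y\in[q]^n$.
   Context: An instance $\mathcal I$ of $\mathrm{CSP}(\Lambda)$ on $N$ variables is a list of constraints, each a $k$-tuple of literals over the variables; $\mathcal I(x)$ is the fraction of constraints satisfied by $x\in\{-1,1\}^N$ and $\mathrm{opt}(\mathcal I)=\max_x\mathcal I(x)$. $\Lambda^s_N$ denotes the family of all instances of $\mathrm{CSP}(\Lambda)$ on $N$ variables with $\mathrm{opt}(\mathcal I)\le s$, and $\mathcal M_{N,s}:\Lambda^s_N\times\{-1,1\}^N\to\mathbb R$ is the matrix $\mathcal M_{N,s}(\mathcal I,x)=c-\mathcal I(x)$. For $f:\{-1,1\}^n\to\mathbb R$, $M^g_f$ is the $[q]^n\times[q]^n$ matrix with $M^g_f(x,y)=f(g(x_1,y_1),\dots,g(x_n,y_n))$. *)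

theory Defs
  imports Main Complex_Main
begin

text \<open>Variables are indexed 0..N-1. A sign vector in {-1,1}^N is a
function nat => int with values in {-1,1} on indices below N and 0 elsewhere. The predicate Lambda is a function on int lists
(only applied to lists of length k with entries in {-1,1}), bool-valued ({0,1}).
[q] = {0..<q}; [q]^n are functions nat => nat with values below q on indices below n
and 0 elsewhere.\<close>

type_synonym literal = "nat \<times> int"
type_synonym constraint = "literal list"
type_synonym csp_inst = "constraint list"

definition pm_vecs :: "nat \<Rightarrow> (nat \<Rightarrow> int) set" where
  "pm_vecs N = {x. (\<forall>i<N. x i \<in> {-1, 1}) \<and> (\<forall>i\<ge>N. x i = 0)}"

definition q_vecs :: "nat \<Rightarrow> nat \<Rightarrow> (nat \<Rightarrow> nat) set" where
  "q_vecs q n = {x. (\<forall>i<n. x i < q) \<and> (\<forall>i\<ge>n. x i = 0)}"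

definition is_instance :: "nat \<Rightarrow> nat \<Rightarrow> csp_inst \<Rightarrow> bool" where
  "is_instance k N I \<longleftrightarrow> I \<noteq> [] \<and>
     (\<forall>C\<in>set I. length C = k \<and> (\<forall>(i, \<sigma>)\<in>set C. i < N \<and> \<sigma> \<in> {-1, 1}))"

definition sat :: "(int list \<Rightarrow> bool) \<Rightarrow> constraint \<Rightarrow> (nat \<Rightarrow> int) \<Rightarrow> bool" where
  "sat \<Lambda> C x \<longleftrightarrow> \<Lambda> (map (\<lambda>(i, \<sigma>). \<sigma> * x i) C)"

definition inst_val :: "(int list \<Rightarrow> bool) \<Rightarrow> csp_inst \<Rightarrow> (nat \<Rightarrow> int) \<Rightarrow> real" where
  "inst_val \<Lambda> I x = real (length (filter (\<lambda>C. sat \<Lambda> C x) I)) / real (length I)"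

definition opt :: "(int list \<Rightarrow> bool) \<Rightarrow> nat \<Rightarrow> csp_inst \<Rightarrow> real" where
  "opt \<Lambda> N I = Max (inst_val \<Lambda> I ` pm_vecs N)"

definition Lambda_s :: "(int list \<Rightarrow> bool) \<Rightarrow> nat \<Rightarrow> real \<Rightarrow> nat \<Rightarrow> csp_inst set" where
  "Lambda_s \<Lambda> k s N = {I. is_instance k N I \<and> opt \<Lambda> N I \<le> s}"

text \<open>The matrix M_{N,s}(I, x) = c - I(x) (rows restricted to Lambda_s, columns to pm_vecs N).\<close>
definition Mmat :: "(int list \<Rightarrow> bool) \<Rightarrow> real \<Rightarrow> csp_inst \<Rightarrow> (nat \<Rightarrow> int) \<Rightarrow> real" where
  "Mmat \<Lambda> c I x = c - inst_val \<Lambda> I x"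

definition Mgf :: "(nat \<Rightarrow> nat \<Rightarrow> int) \<Rightarrow> ((nat \<Rightarrow> int) \<Rightarrow> real) \<Rightarrow> nat
                   \<Rightarrow> (nat \<Rightarrow> nat) \<Rightarrow> (nat \<Rightarrow> nat) \<Rightarrow> real" where
  "Mgf g f n x y = f (\<lambda>i. if i < n then g (x i) (y i) else 0)"

end

theory Submission
  imports Defs "HOL-Library.FuncSet"
begin

lemma pm_vecs_finite: "finite (pm_vecs N)"
proof -
  have "pm_vecs N \<subseteq> (\<lambda>f i. if i < N then f i else 0) ` (PiE {..<N} (\<lambda>_. {-1,1::int}))"
  proof
    fix x assume x: "x \<in> pm_vecs N"
    let ?f = "restrict x {..<N}"
    have "?f \<in> PiE {..<N} (\<lambda>_. {-1,1})" using x by (auto simp: pm_vecs_def)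
    moreover have "x = (\<lambda>i. if i < N then ?f i else 0)" using x by (auto simp: pm_vecs_def)
    ultimately show "x \<in> (\<lambda>f i. if i < N then f i else 0) ` (PiE {..<N} (\<lambda>_. {-1,1::int}))" by blast
  qed
  moreover have "finite (PiE {..<N} (\<lambda>_. {-1,1::int}))" by (rule finite_PiE) auto
  ultimately show ?thesis using finite_surj by blast
qed

lemma pm_vecs_ne: "(\<lambda>i. if i < N then 1 else 0) \<in> pm_vecs N"
  by (auto simp: pm_vecs_def)

lemma sat_cong:
  assumes "\<forall>(i,\<sigma>)\<in>set C. z i = z' i"
  shows "sat \<Lambda> C z = sat \<Lambda> C z'"
proof -
  have "map (\<lambda>(i, \<sigma>). \<sigma> * z i) C = map (\<lambda>(i, \<sigma>). \<sigma> * z' i) C"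
    using assms by (auto intro!: map_cong)
  then show ?thesis unfolding sat_def by (rule arg_cong)
qed

lemma inst_val_cong:
  assumes "\<forall>C\<in>set I. \<forall>(i,\<sigma>)\<in>set C. z i = z' i"
  shows "inst_val \<Lambda> I z = inst_val \<Lambda> I z'"
proof -
  have "filter (\<lambda>C. sat \<Lambda> C z) I = filter (\<lambda>C. sat \<Lambda> C z') I"
    using assms sat_cong by (intro filter_cong) blast+
  then show ?thesis by (simp add: inst_val_def)
qed

lemma sat_ren: "sat \<Lambda> (map (\<lambda>(i,\<sigma>). (h i, \<sigma>)) C) w = sat \<Lambda> C (\<lambda>i. w (h i))"
  proof -
  have "map (\<lambda>(i, \<sigma>). \<sigma> * w i) (map (\<lambda>(i,\<sigma>). (h i, \<sigma>)) C) = map (\<lambda>(i, \<sigma>). \<sigma> * w (h i)) C"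
    by (induction C) auto
  then show ?thesis unfolding sat_def by (rule arg_cong)
qed

lemma inst_val_ren:
  "inst_val \<Lambda> (map (map (\<lambda>(i,\<sigma>). (h i, \<sigma>))) I) w = inst_val \<Lambda> I (\<lambda>i. w (h i))"
  by (simp add: inst_val_def filter_map comp_def sat_ren)

theorem lemma7p3:
  fixes \<Lambda> :: "int list \<Rightarrow> bool" and k n q :: nat and c s :: real
    and Istar :: csp_inst and g :: "nat \<Rightarrow> nat \<Rightarrow> int"
  assumes "is_instance k n Istar"
    and "opt \<Lambda> n Istar = s"
    and "\<forall>a<q. \<forall>b<q. g a b \<in> {-1, 1}"
  shows "\<exists>Iy xt.
           (\<forall>y\<in>q_vecs q n. Iy y \<in> Lambda_s \<Lambda> k s (q * n)) \<and>
           (\<forall>x\<in>q_vecs q n. xt x \<in> pm_vecs (q * n)) \<and>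
           (\<forall>x\<in>q_vecs q n. \<forall>y\<in>q_vecs q n.
              Mmat \<Lambda> c (Iy y) (xt x) = Mgf g (\<lambda>z. c - inst_val \<Lambda> Istar z) n x y)"
proof -
  note inst = assms(1)
  have lits: "\<And>C i \<sigma>. C \<in> set Istar \<Longrightarrow> (i,\<sigma>) \<in> set C \<Longrightarrow> i < n \<and> \<sigma> \<in> {-1,1}"
    using inst unfolding is_instance_def by fast
  define Iy where "Iy y = map (map (\<lambda>(i,\<sigma>). (i*q + y i, \<sigma>))) Istar" for y :: "nat \<Rightarrow> nat"
  define xt where "xt x = (\<lambda>j. if j < q*n then g (x (j div q)) (j mod q) else 0)" for x :: "nat \<Rightarrow> nat"
  have idx: "i*q + b < q*n" if "i < n" "b < q" for i b
  proof -
    have "i*q + b < i*q + q" using that by simp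
    also have "\<dots> = (i+1)*q" by simp
    also have "\<dots> \<le> n*q" using that by (intro mult_right_mono) auto
    finally show ?thesis by (simp add: mult.commute)
  qed
  have P1: "Iy y \<in> Lambda_s \<Lambda> k s (q * n)" if y: "y \<in> q_vecs q n" for y
  proof -
    have yb: "\<And>i. i < n \<Longrightarrow> y i < q" using y by (auto simp: q_vecs_def)
    have isi: "is_instance k (q*n) (Iy y)"
      using inst unfolding is_instance_def Iy_def
      by (fastforce intro: idx yb)
    have "inst_val \<Lambda> (Iy y) w \<le> s" if w: "w \<in> pm_vecs (q*n)" for w
    proof -
      define w' where "w' = (\<lambda>i. if i < n then w (i*q + y i) else 0)"
      have w'p: "w' \<in> pm_vecs n"
        using w idx yb unfolding w'_def pm_vecs_def by auto
      have "inst_val \<Lambda> (Iy y) w = inst_val \<Lambda> Istar (\<lambda>i. w (i*q + y i))"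
        by (simp add: Iy_def inst_val_ren)
      also have "\<dots> = inst_val \<Lambda> Istar w'"
        by (rule inst_val_cong) (auto simp: w'_def dest: lits)
      also have "\<dots> \<le> opt \<Lambda> n Istar"
        unfolding opt_def using w'p pm_vecs_finite by (intro Max_ge) auto
      finally show ?thesis using assms(2) by simp
    qed
    then have "opt \<Lambda> (q*n) (Iy y) \<le> s"
      unfolding opt_def using pm_vecs_finite pm_vecs_ne
      by (subst Max_le_iff) auto
    then show ?thesis using isi by (simp add: Lambda_s_def)
  qed
  have P2: "xt x \<in> pm_vecs (q * n)" if x: "x \<in> q_vecs q n" for x
  proof -
    have "g (x (j div q)) (j mod q) \<in> {-1,1}" if j: "j < q*n" for j
    proof -
      have q0: "q > 0" using j by (cases q) auto
      have "j div q < n" using j by (simp add: div_less_iff_less_mult mult.commute q0)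
      then have "x (j div q) < q" using x by (auto simp: q_vecs_def)
      then show ?thesis using assms(3) q0 by simp
    qed
    then show ?thesis by (auto simp: pm_vecs_def xt_def)
  qed
  have P3: "Mmat \<Lambda> c (Iy y) (xt x) = Mgf g (\<lambda>z. c - inst_val \<Lambda> Istar z) n x y"
    if x: "x \<in> q_vecs q n" and y: "y \<in> q_vecs q n" for x y
  proof -
    have yb: "\<And>i. i < n \<Longrightarrow> y i < q" using y by (auto simp: q_vecs_def)
    have e: "xt x (i*q + y i) = g (x i) (y i)" if "i < n" for i
    proof -
      have q0: "q > 0" using yb that by fastforce
      show ?thesis using idx[OF that yb[OF that]] yb[OF that] q0 by (simp add: xt_def)
    qed
    have "inst_val \<Lambda> (Iy y) (xt x) = inst_val \<Lambda> Istar (\<lambda>i. xt x (i*q + y i))"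
      by (simp add: Iy_def inst_val_ren)
    also have "\<dots> = inst_val \<Lambda> Istar (\<lambda>i. if i < n then g (x i) (y i) else 0)"
      by (rule inst_val_cong) (auto simp: e dest: lits)
    finally show ?thesis by (simp add: Mmat_def Mgf_def)
  qed
  show ?thesis using P1 P2 P3 by blast
qed

end
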